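(* Let $\mu$ be a stationary ergodic and non-degenerate probability measure on $\Omega$. If $\mathbb P_0(T_{-1}=\infty)>0$, then $\mathbb P_0$-almost surely the walk makes only finitely many right excursions from $0$.
   Context: Notation: $\mathbb N=\{1,2,\dots\}$. Cookie environments $\omega\in\Omega=[0,1]^{\mathbb Z\times\mathbb N}$; shift $(\theta\omega)(x,n)=\omega(x+1,n)$; $\mu$ stationary ergodic means $\theta$-invariant and ergodic. Under $P_{\omega,x}$ the excited random walk has $X_0=x$ and from $X_{n-1}$ steps to $X_{n-1}+1$ with probability $\omega(X_{n-1},\#\{k\le n-1:X_k=X_{n-1}\})$, otherwise to $X_{n-1}-1$; $\mathbb P_x=\int P_{\omega,x}\,d\mu(\omega)$. Equivalently, the walk is driven by the random arrow environment $a(x,n)=\mathbf 1_{\{u(x,n)<\omega(x,n)\}}$ with $u(x,n)$ i.i.d. Uniform$[0,1]$ independent of $\omega\sim\mu$, the walk using at its $k$-th visit to $x$ the arrow $a(x,k)$ (1 = step right, 0 = step left). A sequence $b\in\{0,1\}^{\mathbb N}$ is non-degenerate if $b(i)\ne b(i+1)$ for infinitely many $i$; $\mu$ is non-degenerate if almost surely every $a(x,\cdot)$ is non-degenerate. $T_m=\inf\{t\ge0:X_t=m\}$. A right excursion (from $0$) is a segment $X_{\tau_0},\dots,X_{\tau_1}$ with $\tau_0<\tau_1\le\infty$, $X_{\tau_0}=0$, $X_t>0$ for $\tau_0<t<\tau_1$, and either $\tau_1=\infty$ or $X_{\tau_1}=0$. *)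

theory Defs
  imports "HOL-Probability.Probability"
begin

type_synonym env = "int \<times> nat \<Rightarrow> real"

definition idx :: "(int \<times> nat) set" where
  "idx = {(x, n). 1 \<le> n}"

definition OmegaM :: "env measure" where
  "OmegaM = PiM idx (\<lambda>_. restrict_space borel {0..1})"

definition shift :: "env \<Rightarrow> env" where
  "shift \<omega> = restrict (\<lambda>(x, n). \<omega> (x + 1, n)) idx"

definition stationary_ergodic :: "env measure \<Rightarrow> bool" where
  "stationary_ergodic \<mu> \<longleftrightarrow>
     prob_space \<mu> \<and> sets \<mu> = sets OmegaM \<and>
     distr \<mu> OmegaM shift = \<mu> \<and>
     (\<forall>A \<in> sets \<mu>. shift -` A \<inter> space \<mu> = A \<longrightarrow> measure \<mu> A = 0 \<or> measure \<mu> A = 1)"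

definition jointM :: "env measure \<Rightarrow> (env \<times> env) measure" where
  "jointM \<mu> = \<mu> \<Otimes>\<^sub>M PiM idx (\<lambda>_. uniform_measure lborel {0..1::real})"

text \<open>Arrow environment a(x,n) = 1_{u(x,n) < omega(x,n)} (True = step right).\<close>
definition arrow :: "env \<times> env \<Rightarrow> int \<Rightarrow> nat \<Rightarrow> bool" where
  "arrow p x n \<longleftrightarrow> snd p (x, n) < fst p (x, n)"

text \<open>Walk state after n steps: current position and visit counts over times 0..n-1.
  At time n at site y, this is visit number (c y + 1), which uses arrow a y (c y + 1).\<close>
fun walk_state :: "(int \<Rightarrow> nat \<Rightarrow> bool) \<Rightarrow> int \<Rightarrow> nat \<Rightarrow> int \<times> (int \<Rightarrow> nat)" where
  "walk_state a x 0 = (x, (\<lambda>_. 0))"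
| "walk_state a x (Suc n) =
     (let (y, c) = walk_state a x n; k = Suc (c y)
      in (if a y k then y + 1 else y - 1, c(y := k)))"

definition walk :: "(int \<Rightarrow> nat \<Rightarrow> bool) \<Rightarrow> int \<Rightarrow> nat \<Rightarrow> int" where
  "walk a x n = fst (walk_state a x n)"

definition nondegenerate_seq :: "(nat \<Rightarrow> bool) \<Rightarrow> bool" where
  "nondegenerate_seq b \<longleftrightarrow> infinite {i. 1 \<le> i \<and> b i \<noteq> b (Suc i)}"

definition nondegenerate :: "env measure \<Rightarrow> bool" where
  "nondegenerate \<mu> \<longleftrightarrow> (AE p in jointM \<mu>. \<forall>x. nondegenerate_seq (arrow p x))"

definition right_excursion :: "(nat \<Rightarrow> int) \<Rightarrow> nat \<Rightarrow> enat \<Rightarrow> bool" where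
  "right_excursion X \<tau>0 \<tau>1 \<longleftrightarrow>
     enat \<tau>0 < \<tau>1 \<and> X \<tau>0 = 0 \<and>
     (\<forall>t. \<tau>0 < t \<and> enat t < \<tau>1 \<longrightarrow> X t > 0) \<and>
     (\<tau>1 = \<infinity> \<or> X (the_enat \<tau>1) = 0)"

end

theory Submission
  imports Defs
begin


definition stp :: "(int \<Rightarrow> nat \<Rightarrow> bool) \<Rightarrow> int \<times> (int \<Rightarrow> nat) \<Rightarrow> int \<times> (int \<Rightarrow> nat)" where
  "stp a s = (if a (fst s) (Suc (snd s (fst s))) then fst s + 1 else fst s - 1,
              (snd s)(fst s := Suc (snd s (fst s))))"

lemma ws_Suc: "walk_state a x (Suc n) = stp a (walk_state a x n)"
  by (simp add: stp_def split: prod.split)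

lemma ws_0: "walk_state a x 0 = (x, \<lambda>_. 0)" by simp

declare walk_state.simps(2)[simp del]

definition run where "run a s n = (stp a ^^ n) s"

lemma run_Suc: "run a s (Suc n) = stp a (run a s n)" by (simp add: run_def)
lemma run_0: "run a s 0 = s" by (simp add: run_def)

lemma ws_run: "walk_state a x n = run a (x, \<lambda>_. 0) n"
  by (induction n) (simp_all add: ws_Suc run_Suc run_0)

lemma ws_add: "walk_state a x (m + n) = run a (walk_state a x m) n"
  by (induction n) (simp_all add: ws_Suc run_Suc run_0)

lemma walk_step: "walk a x (Suc n) = walk a x n + 1 \<or> walk a x (Suc n) = walk a x n - 1"
  by (simp add: walk_def ws_Suc stp_def)

lemma walk_0: "walk a x 0 = x" by (simp add: walk_def)

lemma ws_cong1:
  assumes "\<And>y k. 0 < k \<Longrightarrow> a y k = a' y k"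
  shows "walk_state a x n = walk_state a' x n"
  by (induction n) (simp_all add: ws_Suc stp_def assms)

lemma walk_cong1:
  assumes "\<And>y k. 0 < k \<Longrightarrow> a y k = a' y k"
  shows "walk a x n = walk a' x n"
  using ws_cong1[OF assms] by (simp add: walk_def)

lemma ws_shift:
  "walk_state (\<lambda>y k. a (y+1) k) x n =
    (fst (walk_state a (x+1) n) - 1, \<lambda>y. snd (walk_state a (x+1) n) (y+1))"
proof (induction n)
  case 0 then show ?case by simp
next
  case (Suc n)
  obtain p c where pc: "walk_state a (x+1) n = (p, c)" by (cases "walk_state a (x+1) n")
  show ?case using Suc pc by (simp add: ws_Suc stp_def fun_eq_iff)
qed

lemma walk_shift: "walk (\<lambda>y k. a (y+1) k) x n = walk a (x+1) n - 1"
  by (simp add: walk_def ws_shift)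

lemma walk_le: "walk a x j \<le> x + int j"
proof (induction j)
  case 0 then show ?case by (simp add: walk_0)
next
  case (Suc j) then show ?case using walk_step[of a x j] by auto
qed

lemma count_le: "snd (walk_state a x j) y \<le> j"
  by (induction j arbitrary: y) (auto simp add: ws_Suc stp_def le_SucI)

lemma count_card: "snd (walk_state a x n) y = card {i. i < n \<and> walk a x i = y}"
proof (induction n)
  case 0 then show ?case by simp
next
  case (Suc n)
  have "{i. i < Suc n \<and> walk a x i = y} = {i. i < n \<and> walk a x i = y} \<union> (if walk a x n = y then {n} else {})"
    by (auto simp: less_Suc_eq)
  then have "card {i. i < Suc n \<and> walk a x i = y} = card {i. i < n \<and> walk a x i = y} + (if walk a x n = y then 1 else 0)"
    by (auto simp: card_insert_if)
  then show ?case using Suc by (auto simp add: ws_Suc stp_def walk_def)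
qed

definition Kx :: "int \<Rightarrow> nat \<Rightarrow> (int \<Rightarrow> nat \<Rightarrow> bool) \<Rightarrow> bool" where
  "Kx x t a \<longleftrightarrow> (\<exists>i\<le>t. walk a x i < x)"

lemma ws_local:
  assumes agree: "\<And>y k. x \<le> y \<Longrightarrow> y \<le> x + int t \<Longrightarrow> 1 \<le> k \<Longrightarrow> k \<le> t \<Longrightarrow> a y k = a' y k"
  shows "i \<le> t \<Longrightarrow> (\<forall>j<i. walk a x j \<ge> x) \<Longrightarrow> walk_state a x i = walk_state a' x i"
proof (induction i)
  case 0 then show ?case by simp
next
  case (Suc i)
  then have eq: "walk_state a x i = walk_state a' x i" by auto
  have ge: "walk a x i \<ge> x" using Suc.prems by auto
  have le: "walk a x i \<le> x + int t" using walk_le[of a x i] Suc.prems by auto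
  have c: "Suc (snd (walk_state a x i) (walk a x i)) \<le> t" using count_le[of a x i] Suc.prems by (meson Suc_le_mono le_trans)
  have "a (walk a x i) (Suc (snd (walk_state a x i) (walk a x i))) = a' (walk a x i) (Suc (snd (walk_state a x i) (walk a x i)))"
    using agree[OF ge le _ c] by simp
  then show ?case using eq by (simp add: ws_Suc stp_def walk_def)
qed

lemma Kx_local1:
  assumes agree: "\<And>y k. x \<le> y \<Longrightarrow> y \<le> x + int t \<Longrightarrow> 1 \<le> k \<Longrightarrow> k \<le> t \<Longrightarrow> a y k = a' y k"
    and "Kx x t a"
  shows "Kx x t a'"
proof -
  obtain i where i: "i \<le> t" "walk a x i < x" "\<forall>j<i. \<not> (j \<le> t \<and> walk a x j < x)"
    using assms(2) unfolding Kx_def using exists_least_iff[of "\<lambda>i. i \<le> t \<and> walk a x i < x"] by blast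
  then have "\<forall>j<i. walk a x j \<ge> x" by auto
  then have "walk_state a x i = walk_state a' x i" using ws_local[of x t a a', OF agree i(1)] by blast
  then show ?thesis using i unfolding Kx_def walk_def by auto
qed

lemma Kx_local:
  assumes agree: "\<And>y k. x \<le> y \<Longrightarrow> y \<le> x + int t \<Longrightarrow> 1 \<le> k \<Longrightarrow> k \<le> t \<Longrightarrow> a y k = a' y k"
  shows "Kx x t a = Kx x t a'"
  using Kx_local1[of x t a a'] Kx_local1[of x t a' a] agree by metis

lemma first_passage:
  assumes "walk a x t < x" shows "\<exists>t. walk a x t = x - 1"
proof -
  obtain i where i: "walk a x i < x" "\<forall>j<i. \<not> walk a x j < x"
    using assms exists_least_iff[of "\<lambda>i. walk a x i < x"] by blast
  then have "i \<noteq> 0" by (metis walk_0 less_irrefl)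
  then obtain j where j: "i = Suc j" by (cases i) auto
  then have "walk a x j \<ge> x" using i by auto
  have "walk a x (Suc j) < x" using i j by simp
  then have "walk a x (Suc j) = x - 1" using walk_step[of a x j] \<open>walk a x j \<ge> x\<close> by linarith
  then show ?thesis by blast
qed

lemma coupling:
  assumes "fst s = fst s'" "\<And>y. y \<ge> z \<Longrightarrow> snd s y = snd s' y"
  shows "(\<forall>j<n. fst (run a s j) \<ge> z) \<Longrightarrow> fst (run a s n) = fst (run a s' n) \<and> (\<forall>y\<ge>z. snd (run a s n) y = snd (run a s' n) y)"
proof (induction n)
  case 0 then show ?case using assms by (simp add: run_0)
next
  case (Suc n)
  then have IH: "fst (run a s n) = fst (run a s' n)" "\<forall>y\<ge>z. snd (run a s n) y = snd (run a s' n) y"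
    and ge: "fst (run a s n) \<ge> z" by auto
  then show ?case by (simp add: run_Suc stp_def)
qed

lemma nd_true:
  assumes "nondegenerate_seq b" shows "\<exists>k\<ge>K. b k"
proof -
  have "infinite {i. 1 \<le> i \<and> b i \<noteq> b (Suc i)}" using assms by (simp add: nondegenerate_seq_def)
  then obtain i where i: "i \<in> {i. 1 \<le> i \<and> b i \<noteq> b (Suc i)}" "i \<ge> K"
    unfolding infinite_nat_iff_unbounded_le by blast
  show ?thesis
  proof (cases "b i")
    case True then show ?thesis using i by blast
  next
    case False then have "b (Suc i)" using i by simp
    moreover have "Suc i \<ge> K" using i by simp
    ultimately show ?thesis by blast
  qed
qed

lemma count_Suc: "snd (walk_state a x (Suc j)) r = snd (walk_state a x j) r + (if walk a x j = r then 1 else 0)"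
  by (simp add: ws_Suc stp_def walk_def)

lemma count_mono: "i \<le> j \<Longrightarrow> snd (walk_state a x i) r \<le> snd (walk_state a x j) r"
  unfolding count_card by (rule card_mono) auto

lemma count_unbounded:
  assumes "infinite {t. walk a x t = r}"
  shows "\<exists>t. snd (walk_state a x t) r \<ge> N"
proof -
  obtain F where F: "F \<subseteq> {t. walk a x t = r}" "finite F" "card F = N"
    using infinite_arbitrarily_large[OF assms] by blast
  define t where "t = Suc (Max (insert 0 F))"
  have "F \<subseteq> {i. i < t \<and> walk a x i = r}"
  proof
    fix i assume "i \<in> F"
    then have "i \<le> Max (insert 0 F)" using F(2) by (intro Max_ge) auto
    then show "i \<in> {i. i < t \<and> walk a x i = r}" using F(1) \<open>i \<in> F\<close> by (auto simp: t_def)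
  qed
  then have "card F \<le> card {i. i < t \<and> walk a x i = r}" by (intro card_mono) auto
  then show ?thesis using F by (auto simp: count_card)
qed

lemma unbounded:
  assumes nd: "\<forall>y. nondegenerate_seq (a y)" and inf0: "infinite {t. walk a 0 t = 0}"
  shows "\<exists>t. walk a 0 t \<ge> M"
proof (rule ccontr)
  assume "\<not> ?thesis"
  then have bd: "\<And>t. walk a 0 t < M" by (metis not_le)
  define X where "X = walk a 0"
  define S where "S = {y. infinite {t. X t = y}}"
  have M0: "0 < M" using bd[of 0] by (simp add: walk_0)
  have fin: "finite (S \<inter> {0..M})" by simp
  have z: "0 \<in> S \<inter> {0..M}" using inf0 M0 by (simp add: S_def X_def)
  define r where "r = Max (S \<inter> {0..M})"
  have ne: "S \<inter> {0..M} \<noteq> {}" using z by blast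
  have rin: "r \<in> S \<inter> {0..M}" using Max_in[OF fin ne] unfolding r_def .
  have rS: "r \<in> S" and r0: "0 \<le> r" using rin by auto
  have rmax: "\<And>y. y \<in> S \<Longrightarrow> 0 \<le> y \<Longrightarrow> y \<le> M \<Longrightarrow> y \<le> r"
    using Max_ge[OF fin] unfolding r_def by auto
  have "r < M"
  proof -
    from rS have "infinite {t. X t = r}" by (simp add: S_def)
    then obtain t where "X t = r" using not_finite_existsD by blast
    then show ?thesis using bd[of t] by (simp add: X_def)
  qed
  then have "r + 1 \<notin> S" using rmax[of "r+1"] r0 by auto
  then have "finite {t. X t = r + 1}" by (simp add: S_def)
  then obtain T0 where T0: "\<forall>t\<in>{t. X t = r + 1}. t \<le> T0"
    unfolding finite_nat_set_iff_bounded_le by blast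
  define T where "T = Suc T0"
  have T: "\<And>t. t \<ge> T \<Longrightarrow> X t \<noteq> r + 1" using T0 unfolding T_def by force
  define f where "f t = snd (walk_state a 0 t) r" for t
  obtain k where k: "k \<ge> f T + 2" "a r k" using nd_true[of "a r" "f T + 2"] nd by blast
  have "\<exists>t. f t \<ge> k" using count_unbounded[of a 0 r k] rS by (simp add: S_def X_def f_def)
  then obtain t0 where t0: "f t0 \<ge> k" "\<forall>t<t0. \<not> f t \<ge> k"
    using exists_least_iff[of "\<lambda>t. f t \<ge> k"] by blast
  have "t0 \<noteq> 0"
  proof
    assume "t0 = 0" then have "k \<le> 0" using t0(1) by (simp add: f_def)
    with k show False by simp
  qed
  then obtain j where j: "t0 = Suc j" by (cases t0) auto
  have fj: "f j < k" using t0 j by auto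
  have fS: "f (Suc j) = f j + (if X j = r then 1 else 0)" by (simp add: f_def X_def count_Suc)
  have Xj: "X j = r" using fS fj t0 j by (auto split: if_splits)
  have fjk: "f j = k - 1" using fS fj t0 j Xj by auto
  have "j \<ge> T"
  proof (rule ccontr)
    assume "\<not> j \<ge> T"
    then have "f j \<le> f T" unfolding f_def by (intro count_mono) auto
    then show False using fjk k by auto
  qed
  have "Suc (f j) = k" using fjk k by auto
  then have "X (Suc j) = r + 1"
    using Xj k(2) by (simp add: X_def walk_def ws_Suc stp_def f_def)
  then show False using T[of "Suc j"] \<open>j \<ge> T\<close> by auto
qed

lemma path_main:
  assumes nd: "\<forall>y. nondegenerate_seq (a y)" and inf0: "infinite {t. walk a 0 t = 0}"
    and x1: "x \<ge> 1"
  shows "\<exists>t. walk a x t < x"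
proof -
  define X where "X = walk a 0"
  obtain s where s: "X s \<ge> x" "\<forall>t<s. \<not> X t \<ge> x"
    using unbounded[OF nd inf0, of x] exists_least_iff[of "\<lambda>t. X t \<ge> x"] unfolding X_def by blast
  have "s \<noteq> 0"
  proof
    assume "s = 0" then have "x \<le> 0" using s(1) by (simp add: X_def walk_0)
    with x1 show False by simp
  qed
  then obtain j where j: "s = Suc j" by (cases s) auto
  have "X j < x" using s j by auto
  then have Xs: "X s = x" using walk_step[of a 0 j] s j unfolding X_def by auto
  have cnt: "\<And>y. y \<ge> x \<Longrightarrow> snd (walk_state a 0 s) y = 0"
    using s by (auto simp: count_card X_def)
  obtain t' where t': "t' > s" "X t' = 0"
    using inf0 unfolding infinite_nat_iff_unbounded X_def by blast
  have "X (s + (t' - s)) < x" using t' x1 by simp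
  then obtain d where d: "X (s + d) < x" "\<forall>e<d. \<not> X (s + e) < x"
    using exists_least_iff[of "\<lambda>d. X (s + d) < x"] by blast
  have pre: "\<forall>j<d. fst (run a (walk_state a 0 s) j) \<ge> x"
    using d(2) by (simp add: X_def walk_def ws_add not_less)
  have f1: "fst (walk_state a 0 s) = fst (x, \<lambda>_::int. 0::nat)" using Xs by (simp add: X_def walk_def)
  have f2: "\<And>y. y \<ge> x \<Longrightarrow> snd (walk_state a 0 s) y = snd (x, \<lambda>_::int. 0::nat) y" using cnt by simp
  have "fst (run a (walk_state a 0 s) d) = fst (run a (x, \<lambda>_. 0) d)"
    using coupling[OF f1 f2 pre] by blast
  moreover have "walk_state a 0 (s+d) = run a (walk_state a 0 s) d" by (rule ws_add)
  moreover have "walk_state a x d = run a (x, \<lambda>_. 0) d" by (rule ws_run)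
  ultimately have "walk a x d = X (s + d)" unfolding X_def walk_def by simp
  then show ?thesis using d(1) by (intro exI[of _ d]) simp
qed



definition U :: "real measure" where "U = uniform_measure lborel {0..1::real}"
definition nu :: "env measure" where "nu = PiM idx (\<lambda>_. U)"

lemma jointM_nu: "jointM \<mu> = \<mu> \<Otimes>\<^sub>M nu" by (simp add: jointM_def nu_def U_def)

lemma prob_U: "prob_space U"
  unfolding U_def by (rule prob_space_uniform_measure) auto

lemma prob_nu: "prob_space nu"
  unfolding nu_def using prob_U by (intro prob_space_PiM) auto

lemma space_nu: "space nu = idx \<rightarrow>\<^sub>E UNIV"
  by (simp add: nu_def space_PiM U_def)

lemma sets_U: "sets U = sets borel" by (simp add: U_def)

lemma idx_Suc[simp]: "(y, Suc k) \<in> idx" by (simp add: idx_def)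
lemma idx_iff: "(y, k) \<in> idx \<longleftrightarrow> 1 \<le> k" by (simp add: idx_def)

definition sg :: "int \<times> nat \<Rightarrow> int \<times> nat" where "sg = (\<lambda>(x, n). (x + 1, n))"

lemma shift_sg: "shift w = (\<lambda>i\<in>idx. w (sg i))"
  by (simp add: shift_def sg_def fun_eq_iff split: prod.split)

lemma sg_idx: "sg \<in> idx \<rightarrow> idx" by (auto simp: sg_def idx_def)
lemma sg_inj: "inj_on sg idx" by (auto simp: inj_on_def sg_def)

lemma shift_meas_Pi: "shift \<in> measurable (PiM idx (\<lambda>_. N)) (PiM idx (\<lambda>_. N))"
  unfolding shift_sg
  by (intro measurable_restrict measurable_component_singleton) (use sg_idx in auto)

lemma shift_nu_meas: "shift \<in> measurable nu nu"
  unfolding nu_def by (rule shift_meas_Pi)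

lemma shift_Omega_meas: "shift \<in> measurable OmegaM OmegaM"
  unfolding OmegaM_def by (rule shift_meas_Pi)

lemma shift_nu: "distr nu nu shift = nu"
proof -
  have "distr (PiM idx (\<lambda>_. U)) (PiM idx (\<lambda>i. (\<lambda>_. U) (sg i))) (\<lambda>\<omega>. \<lambda>n\<in>idx. \<omega> (sg n)) = PiM idx (\<lambda>i. (\<lambda>_. U) (sg i))"
    by (rule distr_PiM_reindex) (use prob_U sg_inj sg_idx in auto)
  then show ?thesis unfolding nu_def shift_sg[abs_def] by simp
qed

lemma arrow_shift: "0 < k \<Longrightarrow> arrow (shift w, shift u) y k = arrow (w, u) (y + 1) k"
  by (auto simp: arrow_def shift_def idx_def)

lemma Kset:
  assumes "\<And>y k. x \<le> y \<Longrightarrow> y \<le> x + int t \<Longrightarrow> 1 \<le> k \<Longrightarrow> k \<le> t \<Longrightarrow> {p\<in>space M. arr p y k} \<in> sets M"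
  shows "{p\<in>space M. Kx x t (arr p)} \<in> sets M"
proof -
  define Box where "Box = {x..x+int t} \<times> {1..t}"
  define ext where "ext b = (\<lambda>y k. if (y,k)\<in>Box then b (y,k) else False)" for b :: "int\<times>nat \<Rightarrow> bool"
  have finB: "finite Box" by (simp add: Box_def)
  have eq: "{p\<in>space M. Kx x t (arr p)} = {p\<in>space M. \<exists>b\<in>Box \<rightarrow>\<^sub>E (UNIV::bool set). Kx x t (ext b) \<and> (\<forall>i. i\<in>Box \<longrightarrow> arr p (fst i) (snd i) = b i)}"
  proof (intro Collect_cong conj_cong refl iffI)
    fix p assume K: "Kx x t (arr p)"
    define b where "b = restrict (\<lambda>i. arr p (fst i) (snd i)) Box"
    have "Kx x t (ext b) = Kx x t (arr p)"
      by (rule Kx_local) (auto simp: ext_def b_def Box_def)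
    then show "\<exists>b\<in>Box \<rightarrow>\<^sub>E (UNIV::bool set). Kx x t (ext b) \<and> (\<forall>i. i\<in>Box \<longrightarrow> arr p (fst i) (snd i) = b i)"
      using K by (intro bexI[of _ b]) (auto simp: b_def)
  next
    fix p assume "\<exists>b\<in>Box \<rightarrow>\<^sub>E (UNIV::bool set). Kx x t (ext b) \<and> (\<forall>i. i\<in>Box \<longrightarrow> arr p (fst i) (snd i) = b i)"
    then obtain b where b: "Kx x t (ext b)" "\<forall>i. i\<in>Box \<longrightarrow> arr p (fst i) (snd i) = b i" by blast
    have "Kx x t (ext b) = Kx x t (arr p)"
      by (rule Kx_local) (use b(2) in \<open>auto simp: ext_def Box_def\<close>)
    then show "Kx x t (arr p)" using b(1) by simp
  qed
  have s1: "{p\<in>space M. i\<in>Box \<longrightarrow> arr p (fst i) (snd i) = b i} \<in> sets M" for b i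
  proof (cases "i \<in> Box")
    case True
    then obtain y k where i: "i = (y,k)" "x \<le> y" "y \<le> x + int t" "1 \<le> k" "k \<le> t"
      by (cases i) (auto simp: Box_def)
    have A: "{p\<in>space M. arr p y k} \<in> sets M" using assms i by auto
    show ?thesis
    proof (cases "b i")
      case True then show ?thesis using A i by simp
    next
      case False then show ?thesis using sets.sets_Collect_neg[OF A] i by simp
    qed
  next
    case False then show ?thesis by simp
  qed
  have s2: "{p\<in>space M. \<forall>i. i\<in>Box \<longrightarrow> arr p (fst i) (snd i) = b i} \<in> sets M" for b
    by (rule sets.sets_Collect_countable_All) (rule s1)
  have s3: "{p\<in>space M. Kx x t (ext b) \<and> (\<forall>i. i\<in>Box \<longrightarrow> arr p (fst i) (snd i) = b i)} \<in> sets M" for b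
    by (cases "Kx x t (ext b)") (use s2 in simp_all)
  show ?thesis unfolding eq
    by (rule sets.sets_Collect_finite_Ex) (use s3 finB in \<open>auto intro: finite_PiE\<close>)
qed

definition Gx :: "int \<Rightarrow> (int \<Rightarrow> nat \<Rightarrow> bool) \<Rightarrow> bool" where
  "Gx x a \<longleftrightarrow> (\<exists>t. Kx x t a)"

lemma Gx_iff: "Gx x a \<longleftrightarrow> (\<exists>i. walk a x i < x)"
  by (auto simp: Gx_def Kx_def)

lemma Gset:
  assumes "\<And>y k. x \<le> y \<Longrightarrow> 1 \<le> k \<Longrightarrow> {p\<in>space M. arr p y k} \<in> sets M"
  shows "{p\<in>space M. Gx x (arr p)} \<in> sets M"
  unfolding Gx_def by (rule sets.sets_Collect_countable_Ex) (rule Kset, rule assms, auto)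

lemma Gx_cong1: "(\<And>y k. 0 < k \<Longrightarrow> a y k = a' y k) \<Longrightarrow> Gx x a = Gx x a'"
  unfolding Gx_iff using walk_cong1[of a a'] by metis

lemma Gx_shift: "Gx x (\<lambda>y k. a (y+1) k) \<longleftrightarrow> Gx (x+1) a"
proof -
  have "\<And>i. (walk a (x+1) i - 1 < x) = (walk a (x+1) i < x + 1)" by arith
  then show ?thesis unfolding Gx_iff walk_shift by simp
qed

definition Phi :: "(int \<Rightarrow> nat \<Rightarrow> bool) \<Rightarrow> bool" where
  "Phi a \<longleftrightarrow> (\<exists>m::nat. \<forall>j::nat. Gx (int m + int j) a)"

lemma Phi_n: "Phi a \<longleftrightarrow> (\<exists>m::nat. \<forall>j::nat. Gx (int n + int m + int j) a)"
proof
  assume "Phi a"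
  then obtain m where m: "\<forall>j::nat. Gx (int m + int j) a" by (auto simp: Phi_def)
  have "Gx (int n + int m + int j) a" for j using m[rule_format, of "n + j"] by (simp add: ac_simps)
  then show "\<exists>m::nat. \<forall>j::nat. Gx (int n + int m + int j) a" by blast
next
  assume "\<exists>m::nat. \<forall>j::nat. Gx (int n + int m + int j) a"
  then obtain m where "\<forall>j::nat. Gx (int n + int m + int j) a" by blast
  then show "Phi a" unfolding Phi_def by (intro exI[of _ "n + m"]) simp
qed

lemma Phi_shift: "Phi (arrow (shift w, shift u)) \<longleftrightarrow> Phi (arrow (w, u))"
proof -
  have G: "Gx x (arrow (shift w, shift u)) \<longleftrightarrow> Gx (x+1) (arrow (w, u))" for x
  proof -
    have "Gx x (arrow (shift w, shift u)) = Gx x (\<lambda>y k. arrow (w, u) (y+1) k)"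
      by (rule Gx_cong1) (simp add: arrow_shift)
    then show ?thesis by (simp add: Gx_shift)
  qed
  have "Phi (arrow (shift w, shift u)) \<longleftrightarrow> (\<exists>m::nat. \<forall>j::nat. Gx (int m + int j + 1) (arrow (w, u)))"
    unfolding Phi_def G by simp
  also have "\<dots> \<longleftrightarrow> (\<exists>m::nat. \<forall>j::nat. Gx (int 1 + int m + int j) (arrow (w, u)))"
    by (simp add: ac_simps)
  also have "\<dots> \<longleftrightarrow> Phi (arrow (w, u))" by (rule Phi_n[symmetric])
  finally show ?thesis .
qed

lemma Gx_arrow_shift: "Gx x (arrow (shift w, shift u)) \<longleftrightarrow> Gx (x+1) (arrow (w, u))"
proof -
  have "Gx x (arrow (shift w, shift u)) = Gx x (\<lambda>y k. arrow (w, u) (y+1) k)"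
    by (rule Gx_cong1) (simp add: arrow_shift)
  then show ?thesis by (simp add: Gx_shift)
qed

definition Km :: "nat \<Rightarrow> (int\<times>nat) set" where "Km m = {i \<in> idx. fst i = int m}"
definition Av :: "nat \<Rightarrow> env set set" where
  "Av m = sigma_sets (space nu) {(\<lambda>u. restrict u (Km m)) -` A \<inter> space nu | A. A \<in> sets (PiM (Km m) (\<lambda>_. U))}"

lemma Av_indep: "prob_space.indep_sets nu Av UNIV"
proof -
  interpret N: prob_space nu by (rule prob_nu)
  have idx_ne: "idx \<noteq> {}" using idx_Suc[of 0 0] by blast
  have rv: "\<And>i. i\<in>idx \<Longrightarrow> (\<lambda>u. u i) \<in> measurable nu U"
    unfolding nu_def by (rule measurable_component_singleton)
  have "distr nu (PiM idx (\<lambda>_. U)) (\<lambda>x. \<lambda>i\<in>idx. x i) = distr nu nu (\<lambda>x. x)"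
    by (rule distr_cong) (auto simp: nu_def space_PiM U_def)
  also have "\<dots> = nu" by simp
  also have "nu = PiM idx (\<lambda>i. distr nu U (\<lambda>x. x i))"
  proof -
    have c: "\<And>i. i \<in> idx \<Longrightarrow> distr (PiM idx (\<lambda>_. U)) U (\<lambda>x. x i) = U"
      by (rule distr_PiM_component) (auto simp: prob_U)
    show ?thesis unfolding nu_def by (rule PiM_cong) (simp_all add: c)
  qed
  finally have eq: "distr nu (PiM idx (\<lambda>_. U)) (\<lambda>x. \<lambda>i\<in>idx. x i) = PiM idx (\<lambda>i. distr nu U (\<lambda>x. x i))" .
  have ind0: "N.indep_vars (\<lambda>_. U) (\<lambda>i u. u i) idx"
    using N.indep_vars_iff_distr_eq_PiM'[OF idx_ne rv] eq by simp
  have ind1: "N.indep_vars (\<lambda>j. PiM (Km j) (\<lambda>_. U)) (\<lambda>j \<omega>. restrict (\<lambda>i. \<omega> i) (Km j)) UNIV"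
    by (rule N.indep_vars_restrict[OF ind0]) (auto simp: Km_def disjoint_family_on_def)
  then show ?thesis unfolding N.indep_vars_def Av_def by simp
qed

lemma Av_sa: "sigma_algebra (space nu) (Av m)"
  unfolding Av_def by (rule sigma_algebra_sigma_sets) auto

lemma Av_cyl: "1 \<le> k \<Longrightarrow> {u\<in>space nu. u (int m, k) < c} \<in> Av m"
proof -
  assume k: "1 \<le> k"
  let ?A = "{f \<in> space (PiM (Km m) (\<lambda>_. U)). f (int m,k) < c}"
  have "(\<lambda>f. f (int m,k)) \<in> measurable (PiM (Km m) (\<lambda>_. U)) U"
    by (rule measurable_component_singleton) (use k in \<open>simp add: Km_def idx_iff\<close>)
  then have "(\<lambda>f. f (int m,k)) \<in> borel_measurable (PiM (Km m) (\<lambda>_. U))"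
    using measurable_cong_sets[OF refl sets_U] by blast
  then have A: "?A \<in> sets (PiM (Km m) (\<lambda>_. U))"
    by (intro borel_measurable_less) auto
  have "(\<lambda>u. restrict u (Km m)) -` ?A \<inter> space nu = {u\<in>space nu. u (int m, k) < c}"
    using k by (auto simp: space_PiM Km_def idx_iff U_def space_nu)
  then show ?thesis using A unfolding Av_def by (metis (mono_tags, lifting) mem_Collect_eq sigma_sets.Basic)
qed

definition Bsec :: "env \<Rightarrow> env set" where "Bsec w = {u\<in>space nu. Phi (arrow (w,u))}"

lemma Bsec_tail: "Bsec w \<in> prob_space.tail_events nu Av"
proof -
  interpret N: prob_space nu by (rule prob_nu)
  have "Bsec w \<in> sigma_sets (space nu) (\<Union>(Av ` {n..}))" for n
  proof -
    have sub1: "Av m \<subseteq> Pow (space nu)" for m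
    proof
      fix X assume "X \<in> Av m"
      moreover have "{(\<lambda>u. restrict u (Km m)) -` A \<inter> space nu | A. A \<in> sets (PiM (Km m) (\<lambda>_. U))} \<subseteq> Pow (space nu)"
        by blast
      ultimately have "X \<subseteq> space nu" unfolding Av_def by (rule sigma_sets_into_sp[rotated])
      then show "X \<in> Pow (space nu)" by simp
    qed
    have sub: "\<Union>(Av ` {n..}) \<subseteq> Pow (space nu)" using sub1 by blast
    define T where "T = sigma (space nu) (\<Union>(Av ` {n..}))"
    have sT: "sets T = sigma_sets (space nu) (\<Union>(Av ` {n..}))" and spT: "space T = space nu"
      using sub by (simp_all add: T_def)
    have G: "{u\<in>space T. Gx x (arrow (w,u))} \<in> sets T" if x: "x \<ge> int n" for x
    proof (rule Gset)
      fix y :: int and k :: nat assume y: "x \<le> y" and k: "1 \<le> k"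
      have ny: "int (nat y) = y" using x y by simp
      have "{u\<in>space T. arrow (w,u) y k} = {u\<in>space nu. u (int (nat y), k) < w (y,k)}"
        unfolding ny spT arrow_def by simp
      also have "\<dots> \<in> Av (nat y)" by (rule Av_cyl[OF k])
      finally have mem: "{u\<in>space T. arrow (w,u) y k} \<in> Av (nat y)" .
      have "nat y \<in> {n..}" using x y by auto
      with mem have "{u\<in>space T. arrow (w,u) y k} \<in> \<Union>(Av ` {n..})" by blast
      then show "{u\<in>space T. arrow (w,u) y k} \<in> sets T" unfolding sT by (rule sigma_sets.Basic)
    qed
    have "Bsec w = {u\<in>space T. \<exists>m::nat. \<forall>j::nat. Gx (int n + int m + int j) (arrow (w,u))}"
      unfolding Bsec_def spT Phi_n[of _ n] ..
    also have "\<dots> \<in> sets T"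
      by (intro sets.sets_Collect_countable_Ex sets.sets_Collect_countable_All G) simp
    finally show ?thesis unfolding sT .
  qed
  then show ?thesis unfolding N.tail_events_def by blast
qed

lemma Bsec_01: "measure nu (Bsec w) = 0 \<or> measure nu (Bsec w) = 1"
proof -
  interpret N: prob_space nu by (rule prob_nu)
  show ?thesis by (rule N.kolmogorov_0_1_law[OF Av_sa Av_indep Bsec_tail])
qed

context
  fixes \<mu> :: "env measure"
  assumes se: "stationary_ergodic \<mu>"
begin

lemma mu_prob: "prob_space \<mu>" using se by (simp add: stationary_ergodic_def)
lemma sets_mu: "sets \<mu> = sets OmegaM" using se by (simp add: stationary_ergodic_def)
lemma space_mu: "space \<mu> = space OmegaM" using sets_eq_imp_space_eq[OF sets_mu] .

lemma shift_mu_meas: "shift \<in> measurable \<mu> \<mu>"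
  using shift_Omega_meas measurable_cong_sets[OF sets_mu sets_mu] by blast

lemma shift_mu: "distr \<mu> \<mu> shift = \<mu>"
proof -
  have "distr \<mu> \<mu> shift = distr \<mu> OmegaM shift" by (rule distr_cong) (simp_all add: sets_mu)
  also have "\<dots> = \<mu>" using se by (simp add: stationary_ergodic_def)
  finally show ?thesis .
qed

definition sJ :: "env \<times> env \<Rightarrow> env \<times> env" where "sJ p = (shift (fst p), shift (snd p))"

lemma sJ_meas: "sJ \<in> measurable (\<mu> \<Otimes>\<^sub>M nu) (\<mu> \<Otimes>\<^sub>M nu)"
  unfolding sJ_def
  by (intro measurable_Pair measurable_compose[OF measurable_fst shift_mu_meas]
        measurable_compose[OF measurable_snd shift_nu_meas])

lemma sJ_inv: "distr (\<mu> \<Otimes>\<^sub>M nu) (\<mu> \<Otimes>\<^sub>M nu) sJ = \<mu> \<Otimes>\<^sub>M nu"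
proof -
  have sf: "sigma_finite_measure (distr nu nu shift)"
    by (simp add: shift_nu prob_space_imp_sigma_finite prob_nu)
  have "distr \<mu> \<mu> shift \<Otimes>\<^sub>M distr nu nu shift = distr (\<mu> \<Otimes>\<^sub>M nu) (\<mu> \<Otimes>\<^sub>M nu) (\<lambda>(x, y). (shift x, shift y))"
    by (rule pair_measure_distr[OF shift_mu_meas shift_nu_meas sf])
  moreover have "(\<lambda>(x, y). (shift x, shift y)) = sJ" by (simp add: sJ_def fun_eq_iff)
  ultimately show ?thesis by (simp add: shift_mu shift_nu)
qed

lemma arrow_sets: "1 \<le> k \<Longrightarrow> {p \<in> space (\<mu> \<Otimes>\<^sub>M nu). arrow p y k} \<in> sets (\<mu> \<Otimes>\<^sub>M nu)"
proof -
  assume k: "1 \<le> k"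
  have "(\<lambda>w. w (y,k)) \<in> measurable OmegaM (restrict_space borel {0..1})"
    unfolding OmegaM_def by (rule measurable_component_singleton) (use k in \<open>simp add: idx_iff\<close>)
  then have "(\<lambda>w. w (y,k)) \<in> borel_measurable OmegaM"
    by (simp add: measurable_restrict_space2_iff)
  then have "(\<lambda>w. w (y,k)) \<in> borel_measurable \<mu>"
    using measurable_cong_sets[OF sets_mu refl] by blast
  then have f1: "(\<lambda>p. fst p (y,k)) \<in> borel_measurable (\<mu> \<Otimes>\<^sub>M nu)"
    by (rule measurable_compose[OF measurable_fst])
  have "(\<lambda>u. u (y,k)) \<in> measurable nu U"
    unfolding nu_def by (rule measurable_component_singleton) (use k in \<open>simp add: idx_iff\<close>)
  then have "(\<lambda>u. u (y,k)) \<in> borel_measurable nu"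
    using measurable_cong_sets[OF refl sets_U] by blast
  then have f2: "(\<lambda>p. snd p (y,k)) \<in> borel_measurable (\<mu> \<Otimes>\<^sub>M nu)"
    by (rule measurable_compose[OF measurable_snd])
  show ?thesis unfolding arrow_def by (rule borel_measurable_less[OF f2 f1])
qed

lemma Gs_sets: "{p \<in> space (\<mu> \<Otimes>\<^sub>M nu). Gx x (arrow p)} \<in> sets (\<mu> \<Otimes>\<^sub>M nu)"
  by (rule Gset) (simp add: arrow_sets)

lemma Gs_stat: "measure (\<mu> \<Otimes>\<^sub>M nu) {p \<in> space (\<mu> \<Otimes>\<^sub>M nu). Gx (x+1) (arrow p)}
   = measure (\<mu> \<Otimes>\<^sub>M nu) {p \<in> space (\<mu> \<Otimes>\<^sub>M nu). Gx x (arrow p)}"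
proof -
  let ?P = "\<mu> \<Otimes>\<^sub>M nu"
  have "sJ -` {p \<in> space ?P. Gx x (arrow p)} \<inter> space ?P = {p \<in> space ?P. Gx (x+1) (arrow p)}"
    using measurable_space[OF sJ_meas] by (auto simp: sJ_def Gx_arrow_shift)
  then have "measure ?P {p \<in> space ?P. Gx (x+1) (arrow p)} = measure (distr ?P ?P sJ) {p \<in> space ?P. Gx x (arrow p)}"
    by (simp add: measure_distr[OF sJ_meas Gs_sets])
  then show ?thesis by (simp add: sJ_inv)
qed

lemma Gs_stat_n: "measure (\<mu> \<Otimes>\<^sub>M nu) {p \<in> space (\<mu> \<Otimes>\<^sub>M nu). Gx (int m) (arrow p)}
   = measure (\<mu> \<Otimes>\<^sub>M nu) {p \<in> space (\<mu> \<Otimes>\<^sub>M nu). Gx 0 (arrow p)}"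
proof (induction m)
  case 0 then show ?case by simp
next
  case (Suc m) then show ?case using Gs_stat[of "int m"] by (simp add: add.commute)
qed

lemma B_sets: "{p\<in>space (\<mu> \<Otimes>\<^sub>M nu). Phi (arrow p)} \<in> sets (\<mu> \<Otimes>\<^sub>M nu)"
  unfolding Phi_def by (intro sets.sets_Collect_countable_Ex sets.sets_Collect_countable_All Gs_sets)

lemma sec_eq: "w \<in> space \<mu> \<Longrightarrow> Pair w -` {p\<in>space (\<mu> \<Otimes>\<^sub>M nu). Phi (arrow p)} = Bsec w"
  by (auto simp: Bsec_def space_pair_measure)

lemma Bsec_sets: "w \<in> space \<mu> \<Longrightarrow> Bsec w \<in> sets nu"
proof -
  assume w: "w \<in> space \<mu>"
  have "Pair w -` {p\<in>space (\<mu> \<Otimes>\<^sub>M nu). Phi (arrow p)} \<inter> space nu \<in> sets nu"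
    by (rule measurable_sets[OF measurable_Pair1'[OF w] B_sets])
  then show ?thesis using sec_eq[OF w] by (simp add: Bsec_def Int_absorb2)
qed

lemma h_shift: "w \<in> space \<mu> \<Longrightarrow> emeasure nu (Bsec (shift w)) = emeasure nu (Bsec w)"
proof -
  assume w: "w \<in> space \<mu>"
  have sw: "shift w \<in> space \<mu>" using measurable_space[OF shift_mu_meas w] .
  have "Bsec w = shift -` Bsec (shift w) \<inter> space nu"
    using measurable_space[OF shift_nu_meas] by (auto simp: Bsec_def Phi_shift)
  then have "emeasure nu (Bsec w) = emeasure (distr nu nu shift) (Bsec (shift w))"
    by (simp add: emeasure_distr[OF shift_nu_meas Bsec_sets[OF sw]])
  then show ?thesis by (simp add: shift_nu)
qed

lemma key:
  assumes hyp: "measure (\<mu> \<Otimes>\<^sub>M nu) {p \<in> space (\<mu> \<Otimes>\<^sub>M nu). \<forall>t. walk (arrow p) 0 t \<noteq> -1} > 0"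
  shows "emeasure (\<mu> \<Otimes>\<^sub>M nu) {p\<in>space (\<mu> \<Otimes>\<^sub>M nu). Phi (arrow p)} = 0"
proof -
  interpret N: prob_space nu by (rule prob_nu)
  interpret Mu: prob_space \<mu> by (rule mu_prob)
  interpret PP: pair_prob_space \<mu> nu
    unfolding pair_prob_space_def pair_sigma_finite_def
    using mu_prob prob_nu prob_space_imp_sigma_finite by auto
  let ?P = "\<mu> \<Otimes>\<^sub>M nu"
  let ?B = "{p\<in>space ?P. Phi (arrow p)}"
  define h where "h w = emeasure nu (Bsec w)" for w
  have h01: "h w = 0 \<or> h w = 1" for w
    using Bsec_01[of w] by (auto simp: h_def N.emeasure_eq_measure)
  have "(\<lambda>w. emeasure nu (Pair w -` ?B)) \<in> borel_measurable \<mu>"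
    by (rule N.measurable_emeasure_Pair[OF B_sets])
  then have hmeas: "h \<in> borel_measurable \<mu>"
    by (rule measurable_cong[THEN iffD1, rotated]) (simp only: h_def sec_eq)
  define H where "H = {w\<in>space \<mu>. h w = 1}"
  have Hs: "H \<in> sets \<mu>"
  proof -
    have "h -` {1} \<inter> space \<mu> \<in> sets \<mu>" by (rule measurable_sets[OF hmeas]) simp
    moreover have "h -` {1} \<inter> space \<mu> = H" by (auto simp: H_def)
    ultimately show ?thesis by simp
  qed
  have inv: "shift -` H \<inter> space \<mu> = H"
    using measurable_space[OF shift_mu_meas] h_shift by (auto simp: H_def h_def)
  have erg: "measure \<mu> H = 0 \<or> measure \<mu> H = 1"
    using se Hs inv unfolding stationary_ergodic_def by blast
  have "emeasure ?P ?B = (\<integral>\<^sup>+ w. emeasure nu (Pair w -` ?B) \<partial>\<mu>)"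
    by (rule N.emeasure_pair_measure_alt[OF B_sets])
  also have "\<dots> = (\<integral>\<^sup>+ w. indicator H w \<partial>\<mu>)"
  proof (rule nn_integral_cong)
    fix w assume w: "w \<in> space \<mu>"
    have "emeasure nu (Pair w -` ?B) = h w" using sec_eq[OF w] by (simp only: h_def)
    then show "emeasure nu (Pair w -` ?B) = indicator H w"
      using h01[of w] w by (auto simp: H_def indicator_def)
  qed
  also have "\<dots> = emeasure \<mu> H" using Hs by simp
  finally have PB: "emeasure ?P ?B = emeasure \<mu> H" .
  define Gs where "Gs x = {p\<in>space ?P. Gx x (arrow p)}" for x
  define Hy where "Hy = {p \<in> space ?P. \<forall>t. walk (arrow p) 0 t \<noteq> -1}"
  have "Hy = space ?P - Gs 0"
  proof -
    have "Gx 0 a \<longleftrightarrow> (\<exists>t. walk a 0 t = -1)" for a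
    proof
      assume "Gx 0 a"
      then obtain i where "walk a 0 i < 0" unfolding Gx_iff by blast
      from first_passage[OF this] show "\<exists>t. walk a 0 t = -1" by simp
    next
      assume "\<exists>t. walk a 0 t = -1"
      then obtain t where "walk a 0 t = -1" by blast
      then show "Gx 0 a" unfolding Gx_iff by (intro exI[of _ t]) simp
    qed
    then show ?thesis by (auto simp: Hy_def Gs_def)
  qed
  then have "measure ?P Hy = 1 - measure ?P (Gs 0)"
    using PP.prob_compl[of "Gs 0"] Gs_sets by (simp add: Gs_def)
  then have G0: "measure ?P (Gs 0) < 1" using hyp by (simp add: Hy_def)
  define D where "D m = {p\<in>space ?P. \<forall>j::nat. Gx (int m + int j) (arrow p)}" for m
  have Ds: "range D \<subseteq> sets ?P"
    unfolding D_def by (auto intro!: sets.sets_Collect_countable_All Gs_sets)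
  have Dinc: "incseq D"
  proof (rule incseq_SucI)
    fix m show "D m \<subseteq> D (Suc m)"
    proof
      fix p assume "p \<in> D m"
      then have "\<forall>j::nat. Gx (int m + int j) (arrow p)" "p \<in> space ?P" by (auto simp: D_def)
      moreover have "Gx (int (Suc m) + int j) (arrow p)" if "\<forall>j::nat. Gx (int m + int j) (arrow p)" for j
        using that[rule_format, of "Suc j"] by (simp add: ac_simps)
      ultimately show "p \<in> D (Suc m)" by (auto simp: D_def)
    qed
  qed
  have BD: "?B = (\<Union>m. D m)" by (auto simp: Phi_def D_def)
  have Dle: "measure ?P (D m) \<le> measure ?P (Gs 0)" for m
  proof -
    have "D m \<subseteq> Gs (int m)" by (auto simp: D_def Gs_def dest: spec[of _ 0])
    moreover have "Gs (int m) \<in> sets ?P" unfolding Gs_def by (rule Gs_sets)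
    ultimately have "measure ?P (D m) \<le> measure ?P (Gs (int m))"
      by (rule PP.finite_measure_mono)
    also have "\<dots> = measure ?P (Gs 0)" unfolding Gs_def by (rule Gs_stat_n)
    finally show ?thesis .
  qed
  have "(\<lambda>m. measure ?P (D m)) \<longlonglongrightarrow> measure ?P (\<Union>m. D m)"
    by (rule PP.finite_Lim_measure_incseq[OF Ds Dinc])
  then have "measure ?P (\<Union>m. D m) \<le> measure ?P (Gs 0)"
    by (rule LIMSEQ_le_const2) (use Dle in auto)
  then have PBlt: "measure ?P ?B < 1" using G0 BD by simp
  have "measure \<mu> H \<noteq> 1"
  proof
    assume "measure \<mu> H = 1"
    then have "emeasure ?P ?B = 1" using PB Mu.emeasure_eq_measure by simp
    then have "measure ?P ?B = 1" by (simp add: PP.emeasure_eq_measure)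
    then show False using PBlt by simp
  qed
  then have "measure \<mu> H = 0" using erg by blast
  then show ?thesis using PB Mu.emeasure_eq_measure by simp
qed

end

lemma fin_exc:
  assumes "finite {t. walk a 0 t = 0}"
  shows "finite {(\<tau>0, \<tau>1). right_excursion (walk a 0) \<tau>0 \<tau>1}"
proof -
  let ?Z = "{t. walk a 0 t = 0}"
  have "{(\<tau>0, \<tau>1). right_excursion (walk a 0) \<tau>0 \<tau>1} \<subseteq> ?Z \<times> insert \<infinity> (enat ` ?Z)"
  proof clarify
    fix \<tau>0 \<tau>1 assume r: "right_excursion (walk a 0) \<tau>0 \<tau>1"
    then have "walk a 0 \<tau>0 = 0" by (simp add: right_excursion_def)
    moreover have "\<tau>1 \<in> insert \<infinity> (enat ` ?Z)"
    proof (cases "\<tau>1 = \<infinity>")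
      case False
      then obtain n where n: "\<tau>1 = enat n" by (cases \<tau>1) auto
      then have "walk a 0 n = 0" using r False by (simp add: right_excursion_def)
      then show ?thesis using n by auto
    qed simp
    ultimately show "\<tau>0 \<in> ?Z \<and> \<tau>1 \<in> insert \<infinity> (enat ` ?Z)" by simp
  qed
  moreover have "finite (?Z \<times> insert \<infinity> (enat ` ?Z))" using assms by simp
  ultimately show ?thesis by (rule finite_subset)
qed

theorem lemma3p7:
  fixes \<mu> :: "env measure"
  assumes "stationary_ergodic \<mu>"
    and "nondegenerate \<mu>"
    and "measure (jointM \<mu>) {p \<in> space (jointM \<mu>). \<forall>t. walk (arrow p) 0 t \<noteq> -1} > 0"
  shows "AE p in jointM \<mu>.
           finite {(\<tau>0, \<tau>1). right_excursion (walk (arrow p) 0) \<tau>0 \<tau>1}"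
proof -
  let ?P = "\<mu> \<Otimes>\<^sub>M nu"
  let ?B = "{p\<in>space ?P. Phi (arrow p)}"
  have e: "emeasure ?P ?B = 0"
    using key[OF assms(1)] assms(3) by (simp add: jointM_nu)
  have a1: "AE p in ?P. p \<notin> ?B"
    by (rule AE_not_in) (use e B_sets[OF assms(1)] in auto)
  have a2: "AE p in ?P. \<forall>x. nondegenerate_seq (arrow p x)"
    using assms(2) unfolding nondegenerate_def jointM_nu .
  have a3: "AE p in ?P. p \<in> space ?P" by (rule AE_space)
  have "AE p in ?P. finite {(\<tau>0, \<tau>1). right_excursion (walk (arrow p) 0) \<tau>0 \<tau>1}"
    using a1 a2 a3
  proof eventually_elim
    case (elim p)
    have "finite {t. walk (arrow p) 0 t = 0}"
    proof (rule ccontr)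
      assume inf: "infinite {t. walk (arrow p) 0 t = 0}"
      have "Gx (int 1 + int j) (arrow p)" for j :: nat
        unfolding Gx_iff by (rule path_main[OF elim(2) inf]) simp
      then have "Phi (arrow p)" unfolding Phi_def by blast
      then show False using elim by simp
    qed
    then show ?case by (rule fin_exc)
  qed
  then show ?thesis unfolding jointM_nu .
qed

end
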